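(* Let $n$ be odd, $k$ a positive integer with $\gcd(k,n)=1$, $q=2^k$, and $c\in\mathbb{F}_{2^n}$. If the equation $(v+1)^{q+1}+cv=0$ has three distinct solutions $v\in\mathbb{F}_{2^n}$, then every such solution $v$ satisfies $\operatorname{Tr}\!\left(v^{-1/(q-1)}\right)=0$. More precisely, in that case there is $u\in\mathbb{F}_{2^n}\setminus\mathbb{F}_2$ such that the three solutions are $$v_1=\frac{1}{(u+u^q)^{q^2-q}},\quad v_2=\frac{u^{q^3-q}}{(u+u^q)^{q^2-q}},\quad v_3=\frac{(u+1)^{q^3-q}}{(u+u^q)^{q^2-q}},$$ and $v_1^{-1/(q-1)}=u^q+u^{q^2}$, $v_2^{-1/(q-1)}=u^{-q}+u^{-q^2}$, $v_3^{-1/(q-1)}=(u+1)^{-q}+(u+1)^{-q^2}$.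
   Context: $\operatorname{Tr}$ is the absolute trace from $\mathbb{F}_{2^n}$ to $\mathbb{F}_2$. Since $\gcd(q-1,2^n-1)=1$, $v^{1/(q-1)}$ denotes the unique $w\in\mathbb{F}_{2^n}$ with $w^{q-1}=v$, and $v^{-1/(q-1)}=1/v^{1/(q-1)}$ for $v\ne0$. *)

theory Defs
  imports Main "HOL-Computational_Algebra.Primes" "HOL-Library.Cardinality"
begin

definition abs_trace :: "nat \<Rightarrow> 'a::field \<Rightarrow> 'a" where
  "abs_trace n x = (\<Sum>i<n. x ^ (2 ^ i))"

definition root_qm1 :: "nat \<Rightarrow> 'a::field \<Rightarrow> 'a" where
  "root_qm1 q v = (THE w. w ^ (q - 1) = v)"

definition invroot_qm1 :: "nat \<Rightarrow> 'a::field \<Rightarrow> 'a" where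
  "invroot_qm1 q v = inverse (root_qm1 q v)"

end

theory Submission
  imports Defs
begin

lemma char2:
  assumes "CARD('a::{field,finite}) = 2^n" "n > 0"
  shows "(1::'a) + 1 = 0"
proof -
  have "(\<Sum>x\<in>(UNIV::'a set). x + 1) = (\<Sum>x\<in>(UNIV::'a set). x)"
    by (rule sum.reindex_bij_witness[where i="\<lambda>x. x - 1" and j="\<lambda>x. x + 1"]) auto
  hence "of_nat (CARD('a)) * (1::'a) = 0" by (simp add: sum.distrib)
  hence "(2::'a)^n = 0" using assms(1) by simp
  hence "(2::'a) = 0" by simp
  thus ?thesis by simp
qed

lemma add_self: "(1::'a::comm_ring_1)+1=0 \<Longrightarrow> x + x = (0::'a)"
  by (metis distrib_right mult_1 mult_zero_left)

lemma frob2: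
  assumes "(1::'a::comm_ring_1)+1=0"
  shows "(a+b)^(2^j) = a^(2^j) + (b::'a)^(2^j)"
proof (induction j)
  case 0 then show ?case by simp
next
  case (Suc j)
  have e: "\<And>x::'a. x^(2^Suc j) = (x^(2^j))^2" by (simp add: power_mult[symmetric] mult.commute)
  have "\<And>A B::'a. (A+B)^2 = A^2 + B^2 + (A*B + A*B)" by (simp add: power2_eq_square algebra_simps)
  then show ?case using e Suc add_self[OF assms] by simp
qed

lemma fermat:
  assumes "CARD('a::{field,finite}) = 2^n"
  shows "(x::'a)^(2^n) = x"
proof (cases "x = 0")
  case True then show ?thesis by simp
next
  case False
  let ?S = "UNIV - {0::'a}"
  have "(\<Prod>y\<in>?S. x * y) = (\<Prod>y\<in>?S. y)"
    by (rule prod.reindex_bij_witness[where i="\<lambda>y. y / x" and j="\<lambda>y. x * y"]) (use False in auto)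
  hence "x ^ card ?S * (\<Prod>y\<in>?S. y) = (\<Prod>y\<in>?S. y)" by (simp add: prod.distrib)
  moreover have "(\<Prod>y\<in>?S. y) \<noteq> 0" by simp
  ultimately have "x ^ card ?S = 1" by simp
  moreover have "card ?S = 2^n - 1" using assms by (simp add: card_Diff_singleton)
  ultimately have "x^(2^n - 1) = 1" by simp
  hence "x * x^(2^n-1) = x" by simp
  moreover have "(2::nat)^n = Suc (2^n - 1)" by simp
  ultimately show ?thesis by (metis power_Suc)
qed

lemma frob_inj:
  assumes "(1::'a::field)+1=0" "x^(2^j) = (y::'a)^(2^j)"
  shows "x = y"
proof -
  have "(x+y)^(2^j) = 0" using assms frob2[OF assms(1)] add_self[OF assms(1)] by simp
  hence "x + y = 0" by simp
  thus ?thesis by (metis add_self[OF assms(1)] add_left_cancel)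
qed

lemma F2_fixed:
  assumes card: "CARD('a::{field,finite}) = 2^n" and "k > 0" "coprime k n"
    and two: "(1::'a)+1=0" and r: "(r::'a)^(2^k) = r"
  shows "r = 0 \<or> r = 1"
proof -
  have add: "r^(2^(a+b)) = r" if "r^(2^a) = r" "r^(2^b) = r" for a b
    using that by (simp add: power_add power_mult)
  have mk: "r^(2^(k*x)) = r" for x
    by (induction x) (simp_all add: add r)
  have rn: "r^(2^n) = r" using fermat[OF card] .
  have mn: "r^(2^(n*y)) = r" for y
    by (induction y) (simp_all add: add rn)
  obtain x y where xy: "k * x = n * y + gcd k n" using bezout_nat[of k n] assms(2) by auto
  hence "k * x = n*y + 1" using assms(3) by simp
  hence "r = r^(2^(n*y+1))" using mk[of x] by simp
  also have "\<dots> = (r^(2^(n*y)))^2" by (simp only: power_add power_one_right power_mult)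
  also have "\<dots> = r^2" using mn by simp
  finally have "r * (r - 1) = 0" by (simp add: power2_eq_square algebra_simps)
  thus ?thesis by simp
qed

lemma trace_sq:
  assumes card: "CARD('a::{field,finite}) = 2^n"
  shows "abs_trace n ((x::'a)^2) = abs_trace n x"
proof -
  have "(\<Sum>i<Suc n. x^(2^i)) = x + (\<Sum>i<n. x^(2^Suc i))" by (simp only: sum.lessThan_Suc_shift) simp
  moreover have "(\<Sum>i<Suc n. x^(2^i)) = (\<Sum>i<n. x^(2^i)) + x" using fermat[OF card, of x] by simp
  moreover have "(\<Sum>i<n. x^(2^Suc i)) = (\<Sum>i<n. (x^2)^(2^i))"
    by (simp add: power_mult[symmetric] mult.commute)
  ultimately show ?thesis unfolding abs_trace_def by (simp add: add.commute)
qed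

lemma trace_frob:
  assumes card: "CARD('a::{field,finite}) = 2^n"
  shows "abs_trace n ((x::'a)^(2^j)) = abs_trace n x"
proof (induction j)
  case 0 then show ?case by simp
next
  case (Suc j)
  have "x^(2^Suc j) = (x^(2^j))^2" by (simp add: power_mult[symmetric] mult.commute)
  then show ?case using trace_sq[OF card] Suc by simp
qed

lemma trace_add:
  assumes "(1::'a::field)+1=0"
  shows "abs_trace n (x + y) = abs_trace n x + abs_trace n (y::'a)"
  unfolding abs_trace_def using frob2[OF assms] by (simp add: sum.distrib)

lemma trace_AS:
  assumes card: "CARD('a::{field,finite}) = 2^n" and two: "(1::'a)+1=0"
  shows "abs_trace n ((x::'a) + x^(2^j)) = 0"
  using trace_add[OF two] trace_frob[OF card] add_self[OF two] by simp


lemma transfer_id: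
  fixes v1 z c :: "'a::field"
  assumes two: "(1::'a)+1=0" and frob: "\<And>a b::'a. (a+b)^q = a^q + b^q"
    and q: "q \<ge> 2"
    and F1: "(v1+1)^(q+1) + c*v1 = 0" and z: "z \<noteq> 0"
  shows "v1 * (((z+v1)+1)^(q+1) + c*(z+v1)) = z^(q+1) * (((v1+1)/z)^q + v1*((v1+1)/z) + v1)"
proof -
  define X where "X = v1 + 1"
  define Xq where "Xq = X^q"
  define zq where "zq = z^q"
  have pq: "\<And>a::'a. a^(q+1) = a^q * a" by simp
  have cv: "c*v1 = Xq * X"
    using F1 unfolding X_def Xq_def pq by (metis add_self[OF two] add_right_cancel add_0)
  have e1: "((z+v1)+1)^(q+1) = (Xq + zq)*(X+z)"
    unfolding pq Xq_def zq_def X_def by (simp add: frob[symmetric] algebra_simps)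
  have e2: "((v1+1)/z)^q = Xq/zq" by (simp add: Xq_def zq_def X_def power_divide)
  have s: "X + v1 = 1" unfolding X_def using add_self[OF two, of v1] by (simp add: algebra_simps)
  have lhs: "v1 * (((z+v1)+1)^(q+1) + c*(z+v1)) = Xq*z + v1*zq*X + v1*zq*z"
  proof -
    have "v1 * (((z+v1)+1)^(q+1) + c*(z+v1)) = v1*(Xq + zq)*(X+z) + (c*v1)*(z+v1)"
      using e1 by (simp add: algebra_simps)
    also have "\<dots> = Xq*z*(X + v1) + v1*zq*X + v1*zq*z + (v1*Xq*X + v1*Xq*X)"
      unfolding cv by (simp add: algebra_simps)
    also have "\<dots> = Xq*z + v1*zq*X + v1*zq*z" using s add_self[OF two, of "v1*Xq*X"] by simp
    finally show ?thesis .
  qed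
  have "zq \<noteq> 0" using z unfolding zq_def by simp
  then have rhs: "z^(q+1) * (((v1+1)/z)^q + v1*((v1+1)/z) + v1) = Xq*z + v1*zq*X + v1*zq*z"
    unfolding e2 pq zq_def[symmetric] X_def[symmetric] using z by (simp add: field_simps Xq_def zq_def)
  show ?thesis using lhs rhs by simp
qed


lemma pow_qm1_inj:
  assumes card: "CARD('a::{field,finite}) = 2^n" and k: "k > 0" and cop: "coprime k n"
    and two: "(1::'a)+1=0" and e: "(a::'a)^(2^k-1) = b^(2^k-1)"
  shows "a = b"
proof -
  have pos: "2^k - 1 > (0::nat)" using k by (metis One_nat_def diff_is_0_eq gr0I not_less one_less_numeral_iff one_less_power semiring_norm(76))
  show ?thesis
  proof (cases "b = 0")
    case True
    then show ?thesis using e pos by (metis power_eq_0_iff gr_implies_not0)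
  next
    case False
    have "a \<noteq> 0" using e pos False by (metis power_eq_0_iff)
    define r where "r = a / b"
    have r1: "r^(2^k-1) = 1" using e False unfolding r_def by (simp add: power_divide)
    have "(2::nat)^k = Suc (2^k - 1)" by simp
    hence "r^(2^k) = r" using r1 by (metis power_Suc mult_1_right mult.commute)
    hence "r = 0 \<or> r = 1" using F2_fixed[OF card k cop two] by blast
    then show ?thesis using False \<open>a \<noteq> 0\<close> unfolding r_def by auto
  qed
qed

lemma invroot_eq:
  assumes card: "CARD('a::{field,finite}) = 2^n" and k: "k > 0" and cop: "coprime k n"
    and two: "(1::'a)+1=0" and e: "(w::'a)^(2^k-1) = v"
  shows "invroot_qm1 (2^k) v = inverse w"
proof -
  have "root_qm1 (2^k) v = w"
    unfolding root_qm1_def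
    by (rule the_equality) (use e pow_qm1_inj[OF card k cop two] in auto)
  thus ?thesis unfolding invroot_qm1_def by simp
qed


theorem mainTheorem3:
  fixes n k q :: nat and c :: "'a::{field,finite}"
  assumes card: "CARD('a) = 2 ^ n"
    and nodd: "odd n"
    and kpos: "k > 0"
    and cop: "coprime k n"
    and qdef: "q = 2 ^ k"
    and three: "\<exists>v1 v2 v3 :: 'a. v1 \<noteq> v2 \<and> v1 \<noteq> v3 \<and> v2 \<noteq> v3 \<and>
                 (v1 + 1) ^ (q + 1) + c * v1 = 0 \<and>
                 (v2 + 1) ^ (q + 1) + c * v2 = 0 \<and>
                 (v3 + 1) ^ (q + 1) + c * v3 = 0"
  shows "(\<forall>v :: 'a. (v + 1) ^ (q + 1) + c * v = 0 \<longrightarrow> abs_trace n (invroot_qm1 q v) = 0)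
    \<and> (\<exists>u :: 'a. u \<noteq> 0 \<and> u \<noteq> 1 \<and>
         (let v1 = 1 / (u + u ^ q) ^ (q ^ 2 - q);
              v2 = u ^ (q ^ 3 - q) / (u + u ^ q) ^ (q ^ 2 - q);
              v3 = (u + 1) ^ (q ^ 3 - q) / (u + u ^ q) ^ (q ^ 2 - q)
          in {v. (v + 1) ^ (q + 1) + c * v = 0} = {v1, v2, v3}
             \<and> invroot_qm1 q v1 = u ^ q + u ^ (q ^ 2)
             \<and> invroot_qm1 q v2 = inverse (u ^ q) + inverse (u ^ (q ^ 2))
             \<and> invroot_qm1 q v3 = inverse ((u + 1) ^ q) + inverse ((u + 1) ^ (q ^ 2))))"
proof -
  have npos: "n > 0" using nodd by (cases n) auto
  have two: "(1::'a) + 1 = 0" by (rule char2[OF card npos])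
  have as: "\<And>x::'a. x + x = 0" by (rule add_self[OF two])
  have two2: "(2::'a) = 0" using two by simp
  have as2: "\<And>x y::'a. x + (x + y) = y" by (metis as add.assoc add_0)
  have q2: "q \<ge> 2" using kpos qdef by (metis One_nat_def Suc_1 Suc_leI one_less_numeral_iff one_less_power semiring_norm(76))
  have frob: "\<And>a b::'a. (a+b)^q = a^q + b^q" using frob2[OF two] qdef by simp
  have inj: "\<And>a b::'a. a^(q-1) = b^(q-1) \<Longrightarrow> a = b" using pow_qm1_inj[OF card kpos cop two] qdef by simp
  have invr: "\<And>w v::'a. w^(q-1) = v \<Longrightarrow> invroot_qm1 q v = inverse w"
    using invroot_eq[OF card kpos cop two] qdef by simp
  have tr: "\<And>x::'a. abs_trace n (x + x^q) = 0" using trace_AS[OF card two] qdef by simp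
  have finj: "inj (\<lambda>x::'a. x^q)" using frob_inj[OF two] qdef by (auto intro: injI)
  hence fsurj: "surj (\<lambda>x::'a. x^q)" by (simp add: finite_UNIV_inj_surj)
  have qs: "Suc (q-1) = q" using q2 by simp
  have pq1: "\<And>a::'a. a^q = a^(q-1) * a"
  proof -
    fix a :: 'a
    have "a^(Suc (q-1)) = a^(q-1)*a" by (rule power_Suc2)
    thus "a^q = a^(q-1) * a" by (simp only: qs)
  qed
  define F where "F v = (v+1)^(q+1) + c*v" for v :: 'a
  define G where "G w y = y^q + w*y + w" for w y :: 'a
  obtain v1 v2 v3 where d12: "v1 \<noteq> v2" and d13: "v1 \<noteq> v3" and d23: "v2 \<noteq> v3"
    and r1: "F v1 = 0" and r2: "F v2 = 0" and r3: "F v3 = 0"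
    using three unfolding F_def by blast
  have nz: "v \<noteq> 0" if "F v = 0" for v
    using that q2 unfolding F_def by auto
  have c0: "c \<noteq> 0"
  proof
    assume "c = 0"
    hence "v = 1" if "F v = 0" for v using that unfolding F_def
      by (metis add_diff_cancel_right' as diff_zero mult_zero_left power_eq_0_iff add.right_neutral)
    thus False using r1 r2 d12 by metis
  qed
  have v1n1: "v1 \<noteq> 1" using r1 c0 q2 unfolding F_def by (auto simp: as)
  define X where "X = v1 + 1"
  have X0: "X \<noteq> 0" unfolding X_def using v1n1 by (metis as2 add_0_right add.commute)
  have v10: "v1 \<noteq> 0" using nz r1 .
  have transfer: "F v = 0 \<longleftrightarrow> G v1 (X/(v+v1)) = 0" if "v \<noteq> v1" for v
  proof -
    define z where "z = v + v1"
    have z0: "z \<noteq> 0" unfolding z_def using that by (metis as2 add_0_right add.commute)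
    have vz: "v = z + v1" unfolding z_def by (simp add: add.assoc as)
    have "v1 * F v = z^(q+1) * G v1 (X/z)"
      unfolding vz F_def G_def X_def using transfer_id[OF two frob q2 r1[unfolded F_def] z0] by simp
    thus ?thesis using v10 z0 unfolding z_def[symmetric] by auto
  qed
  have Gdiff: "(y + y')^q = v1*(y+y')" if "G v1 y = 0" "G v1 y' = 0" for y y'
  proof -
    have "y^q = v1*y + v1" "y'^q = v1*y' + v1" using that unfolding G_def
      by (metis add.assoc as2 add_0_right add.commute)+
    thus ?thesis using frob two2 by (simp add: algebra_simps as)
  qed
  define y2 where "y2 = X/(v2+v1)"
  define y3 where "y3 = X/(v3+v1)"
  have G2: "G v1 y2 = 0" using transfer d12 r2 unfolding y2_def by auto
  have G3: "G v1 y3 = 0" using transfer d13 r3 unfolding y3_def by auto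
  have nz21: "v2 + v1 \<noteq> 0" "v3 + v1 \<noteq> 0" using d12 d13 by (metis as2 add_0_right add.commute)+
  have y20: "y2 \<noteq> 0" "y3 \<noteq> 0" using X0 nz21 unfolding y2_def y3_def by auto
  have y23: "y2 \<noteq> y3"
  proof
    assume "y2 = y3"
    hence "v2 + v1 = v3 + v1" using X0 nz21 unfolding y2_def y3_def by (simp add: field_simps)
    thus False using d23 by simp
  qed
  define \<delta> where "\<delta> = y2 + y3"
  have d0: "\<delta> \<noteq> 0" unfolding \<delta>_def using y23 by (metis as2 add_0_right add.commute)
  have dq: "\<delta>^q = v1 * \<delta>" unfolding \<delta>_def by (rule Gdiff[OF G2 G3])
  have dqm1: "\<delta>^(q-1) = v1" using dq d0 pq1[of \<delta>] by simp
  define p where "p = inverse \<delta>"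
  have p0: "p \<noteq> 0" using d0 unfolding p_def by simp
  have v1p: "v1 = 1 / p^(q-1)" using dqm1 unfolding p_def by (simp add: power_inverse divide_inverse)
  define m where "m = y2 / \<delta>"
  have m0: "m \<noteq> 0" using y20 d0 unfolding m_def by simp
  have y2q: "y2^q = v1*y2 + v1" using G2 unfolding G_def by (metis add.assoc as2 add_0_right add.commute)
  have mp: "m^q + m = p"
  proof -
    have "m^q = (v1*y2 + v1) / (v1*\<delta>)" unfolding m_def using y2q dq by (simp add: power_divide)
    also have "\<dots> = m + p" unfolding m_def p_def using v10 d0 by (simp add: field_simps)
    finally show ?thesis by (simp add: as2 add.commute add.left_commute)
  qed
  have m3: "y3 / \<delta> = m + 1" unfolding m_def \<delta>_def using d0[unfolded \<delta>_def]
    by (simp add: field_simps add.assoc as two2)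
  have m1: "m \<noteq> 1" using m3 y20 d0 by (auto simp: as)
  have mp3: "(m+1)^q + (m+1) = p"
  proof -
    have "(m+1)^q + (m+1) = (m^q + 1) + (m+1)" using frob[of m 1] by simp
    also have "\<dots> = (m^q + m) + (1+1)" by (simp only: add.assoc add.commute add.left_commute)
    also have "\<dots> = p" using mp two by simp
    finally show ?thesis .
  qed
  have nq1: "q^2 - q = q*(q-1)" by (simp add: power2_eq_square diff_mult_distrib2)
  have nq2: "q^3 - q = q*(q^2-1)" by (simp add: power3_eq_cube power2_eq_square diff_mult_distrib2)
  have nq3: "q^2 - 1 = (q+1)*(q-1)" by (simp add: power2_eq_square algebra_simps)
  have nq4: "q^2 = Suc (q^2 - 1)" using q2 by (simp add: power2_eq_square)
  have nq5: "q^2 = q*q" by (simp add: power2_eq_square)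
  have param: "X/(mm/p) + v1 = mm^(q^2-1)/p^(q-1) \<and> (mm^(q+1)/p)^(q-1) = mm^(q^2-1)/p^(q-1)"
    if mm: "mm^q + mm = p" "mm \<noteq> 0" for mm
  proof
    define P where "P = p^(q-1)"
    have P0: "P \<noteq> 0" using p0 unfolding P_def by simp
    have pqP: "p^q = p*P" unfolding P_def using pq1[of p] by simp
    have pq: "p^q = mm^q + mm^(q^2)" using frob[of "mm^q" mm] mm(1) nq5
      by (metis add.commute power_mult)
    have M: "mm + p + p^q = mm^(q^2)"
    proof -
      have "mm + p + p^q = mm + (mm^q + mm) + (mm^q + mm^(q^2))" using pq mm(1) by simp
      also have "\<dots> = (mm + mm) + (mm^q + mm^q) + mm^(q^2)" by (simp only: add.assoc add.commute add.left_commute)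
      finally show ?thesis using as by simp
    qed
    have M2: "mm^(q^2) = mm * mm^(q^2-1)" using nq4 by (metis power_Suc)
    have "X/(mm/p) + v1 = (mm + p + p*P) / (mm*P)"
      unfolding X_def v1p P_def[symmetric] using P0 mm(2) p0 by (simp add: field_simps)
    also have "\<dots> = mm^(q^2-1)/P" unfolding pqP[symmetric] M M2 using mm(2) by simp
    finally show "X/(mm/p) + v1 = mm^(q^2-1)/p^(q-1)" unfolding P_def .
    have "mm^(q^2-1) = (mm^(q+1))^(q-1)" by (simp only: nq3 power_mult)
    then show "(mm^(q+1)/p)^(q-1) = mm^(q^2-1)/p^(q-1)"
      unfolding power_divide by simp
  qed
  have v2eq: "v2 = X/(m/p) + v1"
  proof -
    have "m/p = y2" unfolding m_def p_def using d0 by (simp add: divide_inverse)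
    thus ?thesis unfolding y2_def using X0 nz21 by (simp add: add.assoc as)
  qed
  have v3eq: "v3 = X/((m+1)/p) + v1"
  proof -
    have "(m+1)/p = y3" unfolding m3[symmetric] p_def using d0 by (simp add: divide_inverse)
    thus ?thesis unfolding y3_def using X0 nz21 by (simp add: add.assoc as)
  qed
  have m10: "m + 1 \<noteq> 0" using m1 by (metis as2 add_0_right add.commute)
  have V2: "v2 = m^(q^2-1)/p^(q-1)" and R2: "(m^(q+1)/p)^(q-1) = v2"
    using param[OF mp m0] v2eq by auto
  have V3: "v3 = (m+1)^(q^2-1)/p^(q-1)" and R3: "((m+1)^(q+1)/p)^(q-1) = v3"
    using param[OF mp3 m10] v3eq by auto
  have R1: "(inverse p)^(q-1) = v1" using v1p by (simp add: power_inverse divide_inverse)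
  obtain u where u: "u^q = m" using fsurj by (metis surjD)
  have u0: "u \<noteq> 0" using u m0 q2 by auto
  have u1: "u \<noteq> 1" using u m1 by auto
  have uq2: "u^(q^2) = m^q" using u nq5 by (simp add: power_mult)
  have u1q: "(u+1)^q = m+1" using u frob[of u 1] by simp
  have u1q2: "(u+1)^(q^2) = (m+1)^q" using u1q nq5 by (simp add: power_mult)
  have s: "(u + u^q)^(q^2 - q) = p^(q-1)"
  proof -
    have "(u+u^q)^q = p" using frob[of u "u^q"] u mp nq5 by (simp add: power_mult[symmetric] add.commute)
    thus ?thesis using nq1 by (simp add: power_mult)
  qed
  have s2: "u^(q^3-q) = m^(q^2-1)" using u nq2 by (simp add: power_mult)
  have s3: "(u+1)^(q^3-q) = (m+1)^(q^2-1)" using u1q nq2 by (simp add: power_mult)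
  have Vs: "{v. F v = 0} = {v1, v2, v3}"
  proof (rule set_eqI, rule iffI)
    fix v assume "v \<in> {v. F v = 0}"
    hence Fv: "F v = 0" by simp
    show "v \<in> {v1, v2, v3}"
    proof (cases "v = v1")
      case False
      define y where "y = X/(v+v1)"
      have Gy: "G v1 y = 0" using transfer[OF False] Fv unfolding y_def by simp
      have nzv: "v + v1 \<noteq> 0" using False by (metis as2 add_0_right add.commute)
      have yinj: "v = w" if "X/(v+v1) = X/(w+v1)" "w + v1 \<noteq> 0" for w
      proof -
        have "v + v1 = w + v1" using that X0 nzv by (simp add: field_simps)
        thus ?thesis by simp
      qed
      show ?thesis
      proof (cases "y = y2")
        case True thus ?thesis using yinj[of v2] nz21 unfolding y_def y2_def by simp
      next
        case False
        have e0: "y + y2 \<noteq> 0" using False by (metis as2 add_0_right add.commute)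
        have "(y+y2)^q = v1*(y+y2)" by (rule Gdiff[OF Gy G2])
        hence "(y+y2)^(q-1) = v1" using e0 pq1[of "y+y2"] by simp
        hence "y + y2 = \<delta>" using dqm1 inj by simp
        hence "y = y3" unfolding \<delta>_def by (metis add.commute as2)
        thus ?thesis using yinj[of v3] nz21 unfolding y_def y3_def by simp
      qed
    qed simp
  next
    fix v assume "v \<in> {v1, v2, v3}"
    thus "v \<in> {v. F v = 0}" using r1 r2 r3 by auto
  qed
  have I1: "invroot_qm1 q v1 = m + m^q" using invr[OF R1] mp by (simp add: add.commute)
  have I2: "invroot_qm1 q v2 = inverse m + (inverse m)^q"
  proof -
    have "invroot_qm1 q v2 = p / m^(q+1)" using invr[OF R2] by simp
    also have "\<dots> = inverse m + (inverse m)^q" unfolding mp[symmetric] using m0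
      by (simp add: field_simps power_inverse)
    finally show ?thesis .
  qed
  have I3: "invroot_qm1 q v3 = inverse (m+1) + (inverse (m+1))^q"
  proof -
    have "invroot_qm1 q v3 = p / (m+1)^(q+1)" using invr[OF R3] by simp
    also have "\<dots> = inverse (m+1) + (inverse (m+1))^q" unfolding mp3[symmetric] using m10
      by (simp add: field_simps power_inverse)
    finally show ?thesis .
  qed
  show ?thesis
  proof
    show "\<forall>v. (v + 1) ^ (q + 1) + c * v = 0 \<longrightarrow> abs_trace n (invroot_qm1 q v) = 0"
    proof (intro allI impI)
      fix v assume "(v + 1) ^ (q + 1) + c * v = 0"
      hence "v \<in> {v1,v2,v3}" using Vs unfolding F_def by blast
      thus "abs_trace n (invroot_qm1 q v) = 0" using I1 I2 I3 tr by auto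
    qed
    show "\<exists>u :: 'a. u \<noteq> 0 \<and> u \<noteq> 1 \<and>
         (let v1 = 1 / (u + u ^ q) ^ (q ^ 2 - q);
              v2 = u ^ (q ^ 3 - q) / (u + u ^ q) ^ (q ^ 2 - q);
              v3 = (u + 1) ^ (q ^ 3 - q) / (u + u ^ q) ^ (q ^ 2 - q)
          in {v. (v + 1) ^ (q + 1) + c * v = 0} = {v1, v2, v3}
             \<and> invroot_qm1 q v1 = u ^ q + u ^ (q ^ 2)
             \<and> invroot_qm1 q v2 = inverse (u ^ q) + inverse (u ^ (q ^ 2))
             \<and> invroot_qm1 q v3 = inverse ((u + 1) ^ q) + inverse ((u + 1) ^ (q ^ 2)))"
    proof (intro exI[of _ u] conjI u0 u1)
      have e1: "1 / (u + u ^ q) ^ (q ^ 2 - q) = v1" using s v1p by simp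
      have e2: "u ^ (q ^ 3 - q) / (u + u ^ q) ^ (q ^ 2 - q) = v2" using s s2 V2 by simp
      have e3: "(u + 1) ^ (q ^ 3 - q) / (u + u ^ q) ^ (q ^ 2 - q) = v3" using s s3 V3 by simp
      show "let v1 = 1 / (u + u ^ q) ^ (q ^ 2 - q);
              v2 = u ^ (q ^ 3 - q) / (u + u ^ q) ^ (q ^ 2 - q);
              v3 = (u + 1) ^ (q ^ 3 - q) / (u + u ^ q) ^ (q ^ 2 - q)
          in {v. (v + 1) ^ (q + 1) + c * v = 0} = {v1, v2, v3}
             \<and> invroot_qm1 q v1 = u ^ q + u ^ (q ^ 2)
             \<and> invroot_qm1 q v2 = inverse (u ^ q) + inverse (u ^ (q ^ 2))
             \<and> invroot_qm1 q v3 = inverse ((u + 1) ^ q) + inverse ((u + 1) ^ (q ^ 2))"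
        unfolding Let_def e1 e2 e3
        using Vs I1 I2 I3 u uq2 u1q u1q2 unfolding F_def by (simp add: power_inverse)
    qed
  qed
qed

end
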